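(* Let $1<a_1<a_2$ be coprime integers. Then: (1) the sets $r_0^{-1}(\mathbb{Q})=\{t\in[1,\infty]: r_0(t)\in\mathbb{Q}\}$ and $\mathcal{T}=\{t\in(1,\infty): |P(t)|>\frac{1}{a_2},\ r_0(t)\in\mathbb{Q}\}$ are both countable; (2) $r_0$ is continuous; (3) for every $a>1$, $r_0^{-1}(\mathbb{Q})$ is dense in the ray $(a,\infty)$ (i.e. $(a,\infty)$ is contained in the closure of $r_0^{-1}(\mathbb{Q})$).
   Context: For $t\in[1,\infty)$ and $(u,v)\in\mathbb{R}^2$, $\|(u,v)\|_t=(|u|^t+|v|^t)^{1/t}$, and $\|(u,v)\|_\infty=\max(|u|,|v|)$. For $t\in[1,\infty]$ define $\mu_t(r)=\left\|\left(\frac{1-r}{a_1},\frac{r}{a_2}\right)\right\|_t$ for $r\in[0,1]$, $r_0(t)=\min\{r\in[0,1]:\mu_t(r)=\frac{1}{a_2}\}$ (a function $[1,\infty]\to[0,1]$), and $P(t)=\mu_t'(r_0(t))$ (derivative in $r$). *)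

theory Defs
  imports "HOL-Analysis.Analysis" "HOL-Library.Extended_Real"
begin

text \<open>The t-norm on R^2, t in [1,infinity] (t represented as an extended real;
  only t = ereal x with x >= 1 and t = PInfty are meaningful).\<close>
definition tnorm :: "ereal \<Rightarrow> real \<Rightarrow> real \<Rightarrow> real" where
  "tnorm t u v = (case t of
      ereal x \<Rightarrow> (\<bar>u\<bar> powr x + \<bar>v\<bar> powr x) powr (1 / x)
    | PInfty \<Rightarrow> max \<bar>u\<bar> \<bar>v\<bar>
    | MInfty \<Rightarrow> undefined)"

definition mu :: "int \<Rightarrow> int \<Rightarrow> ereal \<Rightarrow> real \<Rightarrow> real" where
  "mu a1 a2 t r = tnorm t ((1 - r) / real_of_int a1) (r / real_of_int a2)"

text \<open>r_0(t) = min {r in [0,1]. mu_t(r) = 1/a2}; the set is closed and contains 1,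
  so its infimum is its minimum.\<close>
definition r0 :: "int \<Rightarrow> int \<Rightarrow> ereal \<Rightarrow> real" where
  "r0 a1 a2 t = Inf {r \<in> {0..1}. mu a1 a2 t r = 1 / real_of_int a2}"

definition P :: "int \<Rightarrow> int \<Rightarrow> real \<Rightarrow> real" where
  "P a1 a2 t = deriv (\<lambda>r. mu a1 a2 (ereal t) r) (r0 a1 a2 (ereal t))"

end

theory Submission
  imports Defs
begin


lemma pw_lt1:
  fixes A x c :: real
  assumes "0 \<le> A" "0 < x" "0 \<le> c"
  shows "A powr (1/x) < c \<longleftrightarrow> A < c powr x"
proof -
  have e: "(A powr (1/x)) powr x = A" using assms by (simp add: powr_powr)
  have e2: "(c powr x) powr (1/x) = c" using assms by (simp add: powr_powr)
  show ?thesis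
  proof
    assume "A powr (1/x) < c"
    then have "(A powr (1/x)) powr x < c powr x" using assms by (intro powr_less_mono2) auto
    then show "A < c powr x" using e by simp
  next
    assume "A < c powr x"
    then have "A powr (1/x) < (c powr x) powr (1/x)" using assms by (intro powr_less_mono2) auto
    then show "A powr (1/x) < c" using e2 by simp
  qed
qed

lemma pw_lt2:
  fixes A x c :: real
  assumes "0 \<le> A" "0 < x" "0 \<le> c"
  shows "c < A powr (1/x) \<longleftrightarrow> c powr x < A"
proof -
  have e: "(A powr (1/x)) powr x = A" using assms by (simp add: powr_powr)
  have e2: "(c powr x) powr (1/x) = c" using assms by (simp add: powr_powr)
  show ?thesis
  proof
    assume "c < A powr (1/x)"
    then have "c powr x < (A powr (1/x)) powr x" using assms by (intro powr_less_mono2) auto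
    then show "c powr x < A" using e by simp
  next
    assume "c powr x < A"
    then have "(c powr x) powr (1/x) < A powr (1/x)" using assms by (intro powr_less_mono2) auto
    then show "c < A powr (1/x)" using e2 by simp
  qed
qed

lemma pw_eq:
  fixes A x c :: real
  assumes "0 \<le> A" "0 < x" "0 \<le> c"
  shows "A powr (1/x) = c \<longleftrightarrow> A = c powr x"
  using pw_lt1[OF assms] pw_lt2[OF assms] by (metis linorder_neq_iff)

lemma tn_fin: "tnorm (ereal x) u v = (\<bar>u\<bar> powr x + \<bar>v\<bar> powr x) powr (1 / x)"
  by (simp add: tnorm_def)
lemma tn_inf: "tnorm \<infinity> u v = max \<bar>u\<bar> \<bar>v\<bar>"
  by (simp add: tnorm_def)

lemma tn_strict_fin:
  fixes u v a b :: real
  assumes "0 < u" "0 < v" "1 \<le> a" "a < b"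
  shows "tnorm (ereal b) u v < tnorm (ereal a) u v"
proof -
  define N where "N = (u powr a + v powr a) powr (1/a)"
  have Spos: "u powr a + v powr a > 0" using assms by (simp add: add_pos_pos)
  then have Npos: "N > 0" unfolding N_def by simp
  have Na: "N powr a = u powr a + v powr a" unfolding N_def using assms by (simp add: powr_powr)
  define \<alpha> where "\<alpha> = u / N"
  define \<beta> where "\<beta> = v / N"
  have ab: "\<alpha> powr a + \<beta> powr a = 1" unfolding \<alpha>_def \<beta>_def using Npos assms Na Spos
    by (simp add: powr_divide add_divide_distrib[symmetric])
  have a0: "\<alpha> > 0" "\<beta> > 0" unfolding \<alpha>_def \<beta>_def using Npos assms by auto
  have "\<alpha> powr a > 0" "\<beta> powr a > 0" using a0 by auto
  then have "\<alpha> powr a < 1" "\<beta> powr a < 1" using ab by linarith+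
  then have a1: "\<alpha> < 1" "\<beta> < 1" using a0 assms
    by (metis ge_one_powr_ge_zero not_le order.trans zero_le_one)+
  have "\<alpha> powr b < \<alpha> powr a" using a0 a1 assms by (simp add: powr_less_mono')
  moreover have "\<beta> powr b < \<beta> powr a" using a0 a1 assms by (simp add: powr_less_mono')
  ultimately have "\<alpha> powr b + \<beta> powr b < 1" using ab by linarith
  then have "u powr b + v powr b < N powr b"
    unfolding \<alpha>_def \<beta>_def using Npos assms by (simp add: powr_divide add_divide_distrib[symmetric] divide_less_eq)
  then have "(u powr b + v powr b) powr (1/b) < N"
    using pw_lt1[of "u powr b + v powr b" b N] Npos assms by simp
  then show ?thesis using assms by (simp add: tn_fin N_def)
qed


lemma tn_strict_inf:
  fixes u v a :: real
  assumes "0 < u" "0 < v" "1 \<le> a"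
  shows "tnorm \<infinity> u v < tnorm (ereal a) u v"
proof -
  have "max u v powr a < u powr a + v powr a"
    using assms by (cases "u \<le> v") (auto simp: max_def)
  then have "max u v < (u powr a + v powr a) powr (1/a)"
    using pw_lt2[of "u powr a + v powr a" a "max u v"] assms by simp
  then show ?thesis using assms by (simp add: tn_fin tn_inf)
qed

lemma tn_strict:
  fixes u v :: real and s t :: ereal
  assumes "0 < u" "0 < v" "1 \<le> s" "s < t"
  shows "tnorm t u v < tnorm s u v"
proof -
  obtain a where a: "s = ereal a" using assms
    by (cases s) auto
  show ?thesis
  proof (cases t)
    case (real b)
    then show ?thesis using assms a tn_strict_fin[of u v a b] by auto
  next
    case PInf
    then show ?thesis using assms a tn_strict_inf[of u v a] by auto
  next
    case MInf
    then show ?thesis using assms by auto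
  qed
qed

lemma tn_mono:
  fixes u v :: real and s t :: ereal
  assumes "0 < u" "0 < v" "1 \<le> s" "s \<le> t"
  shows "tnorm t u v \<le> tnorm s u v"
  using tn_strict[OF assms(1-3), of t] assms(4) by (cases "s = t") (auto simp: order.order_iff_strict less_imp_le)

lemma tn_bound:
  fixes u v x :: real
  assumes "0 \<le> u" "0 \<le> v" "0 < x"
  shows "tnorm (ereal x) u v \<le> 2 powr (1/x) * max u v"
proof -
  have "u powr x + v powr x \<le> 2 * (max u v powr x)"
    using assms powr_mono2[of x u "max u v"] powr_mono2[of x v "max u v"] by auto
  then have "(u powr x + v powr x) powr (1/x) \<le> (2 * (max u v powr x)) powr (1/x)"
    using assms by (intro powr_mono2) auto
  also have "\<dots> = 2 powr (1/x) * max u v"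
    using assms by (simp add: powr_mult powr_powr)
  finally show ?thesis using assms by (simp add: tn_fin)
qed


lemma conv_pow:
  fixes a b l x :: real
  assumes "0 < a" "0 < b" "0 \<le> l" "l \<le> 1" "1 \<le> x"
  shows "((1-l)*a + l*b) powr x \<le> (1-l) * a powr x + l * b powr x"
  using convex_onD[OF powr_convex[OF assms(5)], of l a b] assms by simp

definition mm :: "real \<Rightarrow> real \<Rightarrow> ereal \<Rightarrow> real \<Rightarrow> real" where
  "mm p q t r = tnorm t ((1 - r) / p) (r / q)"

definition SP :: "real \<Rightarrow> real \<Rightarrow> ereal \<Rightarrow> real \<Rightarrow> bool" where
  "SP p q t R \<longleftrightarrow> 0 < R \<and> R \<le> 1 \<and> mm p q t R = 1/q
     \<and> (\<forall>r. 0 \<le> r \<and> r < R \<longrightarrow> mm p q t r > 1/q)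
     \<and> (\<forall>r. R < r \<and> r < 1 \<longrightarrow> mm p q t r < 1/q)
     \<and> (1 < t \<longrightarrow> R < 1)"

lemma SP_inf:
  assumes "0 < p" "p < q"
  shows "SP p q \<infinity> (1 - p/q)"
proof -
  have pq: "p/q < 1" "0 < p/q" using assms by auto
  have e: "(1 - (1 - p/q))/p = 1/q" using assms by (simp add: field_simps)
  have "(1 - p / q) / q < 1/q" using assms by (simp add: divide_strict_right_mono)
  then have "mm p q \<infinity> (1 - p/q) = 1/q" using assms pq
    unfolding mm_def tn_inf e by (simp add: max_def)
  moreover have "mm p q \<infinity> r > 1/q" if "0 \<le> r" "r < 1 - p/q" for r
  proof -
    have h1: "(1 - r)/p > 1/q" using that assms by (simp add: field_simps)
    have "1 - r > 0" using that pq by linarith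
    then have "\<bar>(1 - r)/p\<bar> = (1-r)/p" using assms by simp
    then show ?thesis using h1 unfolding mm_def tn_inf by simp
  qed
  moreover have "mm p q \<infinity> r < 1/q" if "1 - p/q < r" "r < 1" for r
  proof -
    have "(1 - r)/p < 1/q" using that assms by (simp add: field_simps)
    moreover have "\<bar>(1 - r)/p\<bar> = (1-r)/p" using that assms by simp
    moreover have "r > 0" using that pq by linarith
    then have "\<bar>r/q\<bar> < 1/q" using that assms by (simp add: field_simps)
    ultimately show ?thesis unfolding mm_def tn_inf by simp
  qed
  ultimately show ?thesis unfolding SP_def using pq by auto
qed

lemma SP_one:
  assumes "0 < p" "p < q"
  shows "SP p q (ereal 1) 1"
proof -
  have m1: "mm p q (ereal 1) r = (1-r)/p + r/q" if "0 \<le> r" "r \<le> 1" for r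
    using that assms unfolding mm_def tn_fin by simp
  have "mm p q (ereal 1) r > 1/q" if "0 \<le> r" "r < 1" for r
  proof -
    have "(1-r)/q < (1-r)/p" using that assms by (simp add: frac_less2)
    then show ?thesis using m1[of r] that by (simp add: diff_divide_distrib)
  qed
  then show ?thesis unfolding SP_def using m1[of 1] by auto
qed


lemma mm_fin:
  assumes "0 < p" "p < q" "0 \<le> r" "r \<le> 1"
  shows "mm p q (ereal x) r = (((1-r)/p) powr x + (r/q) powr x) powr (1/x)"
  using assms unfolding mm_def tn_fin by simp

lemma near1:
  fixes p q x :: real
  assumes "0 < p" "p < q" "1 < x"
  obtains d where "0 < d" "d < 1"
    "\<And>r. 1 - d < r \<Longrightarrow> r < 1 \<Longrightarrow> ((1-r)/p) powr x + (r/q) powr x < (1/q) powr x"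
proof -
  define d where "d = (p/q) powr (x/(x-1))"
  have pq: "0 < p/q" "p/q < 1" using assms by auto
  have d0: "0 < d" unfolding d_def using pq assms by simp
  have "(p/q) powr (x/(x-1)) < 1 powr (x/(x-1))"
    using pq assms by (intro powr_less_mono2) auto
  then have d1: "d < 1" unfolding d_def by simp
  have dx: "d powr (x-1) = (p/q) powr x" unfolding d_def using assms pq by (simp add: powr_powr)
  have "((1-r)/p) powr x + (r/q) powr x < (1/q) powr x" if r: "1 - d < r" "r < 1" for r
  proof -
    define s where "s = 1 - r"
    have s: "0 < s" "s < d" using r unfolding s_def by auto
    have "s powr (x-1) < d powr (x-1)" using s assms by (intro powr_less_mono2) auto
    then have sx: "s powr (x-1) < p powr x / q powr x" using dx pq assms by (simp add: powr_divide)
    have sxe: "s powr x = s * s powr (x-1)" using s powr_add[of s 1 "x-1"] by simp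
    have qx: "q powr x > 0" "p powr x > 0" using assms by auto
    have "s powr x < s * (p powr x / q powr x)" using mult_strict_left_mono[OF sx s(1)] sxe by simp
    then have "s powr x / p powr x < s * (p powr x / q powr x) / p powr x"
      using qx by (intro divide_strict_right_mono) auto
    also have "\<dots> = s / q powr x" using qx by simp
    finally have t1: "(s/p) powr x < s / q powr x"
      using assms s by (simp add: powr_divide)
    have "r powr x \<le> r" using r s d1 assms by (intro powr_le_one_le) (auto simp: s_def)
    then have t2: "(r/q) powr x \<le> r / q powr x" using assms r s d1 qx
      by (simp add: powr_divide divide_right_mono)
    have t3: "(1/q) powr x = 1 / q powr x" using assms by (simp add: powr_divide)
    have t4: "s / q powr x + r / q powr x = 1 / q powr x" unfolding s_def
      by (simp add: add_divide_distrib[symmetric])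
    have "(1-r)/p = s/p" unfolding s_def by simp
    then show ?thesis using t1 t2 t3 t4 by (simp only:)
  qed
  then show ?thesis using that d0 d1 by blast
qed



lemma SP_fin:
  fixes p q x :: real
  assumes pq: "0 < p" "p < q" and x: "1 < x"
  shows "\<exists>R. SP p q (ereal x) R"
proof -
  define f where "f = mm p q (ereal x)"
  define A where "A r = ((1-r)/p) powr x + (r/q) powr x" for r
  define C where "C = (1/q) powr x"
  have fA: "f r = A r powr (1/x)" if "0 \<le> r" "r \<le> 1" for r
    unfolding f_def A_def using mm_fin[OF pq that] .
  have A0: "A r \<ge> 0" for r unfolding A_def by simp
  have flt: "f r < 1/q \<longleftrightarrow> A r < C" if "0 \<le> r" "r \<le> 1" for r
    unfolding fA[OF that] C_def using pw_lt1[OF A0, of x "1/q"] x pq by simp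
  have fgt: "1/q < f r \<longleftrightarrow> C < A r" if "0 \<le> r" "r \<le> 1" for r
    unfolding fA[OF that] C_def using pw_lt2[OF A0, of x "1/q"] x pq by simp
  have feq: "f r = 1/q \<longleftrightarrow> A r = C" if "0 \<le> r" "r \<le> 1" for r
    unfolding fA[OF that] C_def using pw_eq[OF A0, of x "1/q"] x pq by simp
  have contg: "continuous_on {0..1} (\<lambda>r. A r powr (1/x))"
    unfolding A_def using pq x
    by (intro continuous_on_powr' continuous_intros) auto
  have contf: "continuous_on {0..1} f"
    using contg by (rule continuous_on_cong[THEN iffD1, rotated 2]) (auto simp: fA)
  define S where "S = {r \<in> {0..1}. f r = 1/q}"
  have clS: "closed S" unfolding S_def
    by (rule continuous_closed_preimage_constant[OF contf]) simp
  have A1: "A 1 = C" unfolding A_def C_def using x by simp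
  have "1 \<in> S" unfolding S_def using feq[of 1] A1 by simp
  then have SNE: "S \<noteq> {}" by auto
  have bdd: "bdd_below S" unfolding S_def by (rule bdd_belowI[of _ 0]) auto
  define R where "R = Inf S"
  have RS: "R \<in> S" unfolding R_def using closed_contains_Inf[OF SNE bdd clS] .
  then have R01: "0 \<le> R" "R \<le> 1" and fR: "f R = 1/q" unfolding S_def by auto
  have "A 0 = (1/p) powr x" unfolding A_def using x by simp
  moreover have "(1/q) powr x < (1/p) powr x" using pq x
    by (intro powr_less_mono2) (auto simp: frac_less2)
  ultimately have f0: "1/q < f 0" using fgt[of 0] unfolding C_def by simp
  have below: "1/q < f r" if r: "0 \<le> r" "r < R" for r
  proof (rule ccontr)
    assume "\<not> 1/q < f r"
    then have "f r \<le> 1/q" by simp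
    moreover have "continuous_on {0..r} f"
      using r R01 by (intro continuous_on_subset[OF contf]) auto
    ultimately obtain z where z: "0 \<le> z" "z \<le> r" "f z = 1/q"
      using IVT2'[of f r "1/q" 0] f0 r by auto
    then have "z \<in> S" unfolding S_def using r R01 by auto
    then have "R \<le> z" unfolding R_def using bdd by (rule cInf_lower)
    then show False using z r by simp
  qed
  have Rpos: "0 < R" using R01 fR f0 by (cases "R = 0") auto
  obtain d where d: "0 < d" "d < 1"
    and dA: "\<And>r. 1 - d < r \<Longrightarrow> r < 1 \<Longrightarrow> A r < C"
    using near1[OF pq x] unfolding A_def C_def by blast
  have Rlt1: "R < 1"
  proof -
    define y where "y = 1 - d/2"
    have y: "1 - d < y" "y < 1" "0 \<le> y" using d unfolding y_def by auto
    then have "f y < 1/q" using flt[of y] dA[of y] by simp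
    then have "\<not> y < R" "y \<noteq> R" using below[of y] y fR by auto
    then show ?thesis using y by simp
  qed
  have ARC: "A R = C" using feq[of R] R01 fR by simp
  have above: "f r < 1/q" if r: "R < r" "r < 1" for r
  proof -
    define y where "y = (max r (1-d) + 1)/2"
    have y: "r < y" "1 - d < y" "y < 1" using r d unfolding y_def by (auto simp: max_def)
    have Ay: "A y < C" using dA y by simp
    define l where "l = (r - R)/(y - R)"
    have l: "0 < l" "l < 1" unfolding l_def using r y by auto
    have ne: "y - R \<noteq> 0" using r y by simp
    have ly: "l * (y - R) = r - R" unfolding l_def using ne by simp
    have rl: "r = (1-l)*R + l*y" using ly by (simp add: algebra_simps)
    have "1 - r = (1-l)*(1-R) + l*(1-y)" using rl by (simp add: algebra_simps)
    then have e1: "(1-r)/p = (1-l)*((1-R)/p) + l*((1-y)/p)"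
      by (metis add_divide_distrib times_divide_eq_right)
    have e2: "r/q = (1-l)*(R/q) + l*(y/q)" using rl
      by (metis add_divide_distrib times_divide_eq_right)
    have c1: "((1-r)/p) powr x \<le> (1-l)*((1-R)/p) powr x + l*((1-y)/p) powr x"
      unfolding e1 using pq Rlt1 y l x by (intro conv_pow) auto
    have c2: "(r/q) powr x \<le> (1-l)*(R/q) powr x + l*(y/q) powr x"
      unfolding e2 using pq Rpos y l x r by (intro conv_pow) auto
    have "A r \<le> (1-l) * A R + l * A y"
      using c1 c2 unfolding A_def by (simp add: algebra_simps)
    also have "\<dots> < (1-l) * C + l * C"
      using ARC Ay l by simp
    finally have "A r < C" by (simp add: algebra_simps)
    then show ?thesis using flt[of r] r R01 by simp
  qed
  have "SP p q (ereal x) R"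
    unfolding SP_def using Rpos R01 fR below above Rlt1 unfolding f_def by auto
  then show ?thesis by blast
qed


lemma SP_all:
  assumes "0 < p" "p < q" "1 \<le> t"
  shows "\<exists>R. SP p q t R"
proof (cases t)
  case (real x)
  then have "x = 1 \<or> 1 < x" using assms by auto
  then show ?thesis using SP_fin[OF assms(1,2)] SP_one[OF assms(1,2)] real by auto
next
  case PInf
  then show ?thesis using SP_inf[OF assms(1,2)] by auto
next
  case MInf
  then show ?thesis using assms by auto
qed

definition rr :: "real \<Rightarrow> real \<Rightarrow> ereal \<Rightarrow> real" where
  "rr p q t = Inf {r \<in> {0..1}. mm p q t r = 1/q}"

lemma SP_Inf:
  assumes "SP p q t R"
  shows "rr p q t = R"
  unfolding rr_def
proof (rule cInf_eq_minimum)
  show "R \<in> {r \<in> {0..1}. mm p q t r = 1/q}" using assms unfolding SP_def by auto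
  fix r assume "r \<in> {r \<in> {0..1}. mm p q t r = 1/q}"
  then show "R \<le> r" using assms unfolding SP_def by (metis (mono_tags, lifting) atLeastAtMost_iff
        less_irrefl mem_Collect_eq not_le)
qed

lemma SP_rr:
  assumes "0 < p" "p < q" "1 \<le> t"
  shows "SP p q t (rr p q t)"
  using SP_all[OF assms] SP_Inf by metis

lemma rr_gt:
  assumes "0 < p" "p < q" "1 \<le> t" "0 \<le> r" "r < 1" "1/q < mm p q t r"
  shows "r < rr p q t"
  using SP_rr[OF assms(1-3)] assms(4-6) unfolding SP_def
  by (metis less_irrefl not_less_iff_gr_or_eq)

lemma rr_lt:
  assumes "0 < p" "p < q" "1 \<le> t" "0 \<le> r" "r < 1" "mm p q t r < 1/q"
  shows "rr p q t < r"
  using SP_rr[OF assms(1-3)] assms(4-6) unfolding SP_def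
  by (metis less_irrefl not_less_iff_gr_or_eq less_asym)

lemma mm_mono:
  assumes "0 < p" "p < q" "0 < r" "r < 1" "1 \<le> s" "s \<le> t"
  shows "mm p q t r \<le> mm p q s r"
  unfolding mm_def using assms by (intro tn_mono) auto

lemma mm_strict:
  assumes "0 < p" "p < q" "0 < r" "r < 1" "1 \<le> s" "s < t"
  shows "mm p q t r < mm p q s r"
  unfolding mm_def using assms by (intro tn_strict) auto

lemma rr_strict:
  assumes pq: "0 < p" "p < q" and st: "1 \<le> s" "s < t"
  shows "rr p q t < rr p q s"
proof -
  have t1: "1 \<le> t" using st by auto
  have SPs: "SP p q s (rr p q s)" using SP_rr[OF pq st(1)] .
  have SPt: "SP p q t (rr p q t)" using SP_rr[OF pq t1] .
  show ?thesis
  proof (cases "rr p q s < 1")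
    case True
    define R where "R = rr p q s"
    have R: "0 < R" "R < 1" "mm p q s R = 1/q" using SPs True unfolding SP_def R_def by auto
    have "mm p q t R < 1/q" using mm_strict[OF pq R(1,2) st] R(3) by simp
    then show ?thesis using rr_lt[OF pq t1, of R] R unfolding R_def by simp
  next
    case False
    then have "rr p q s = 1" using SPs unfolding SP_def by auto
    moreover have "rr p q t < 1" using SPt st unfolding SP_def by auto
    ultimately show ?thesis by simp
  qed
qed



lemma phi_lim:
  fixes u v x0 :: real
  assumes "0 < u" "0 < v" "0 < x0"
  shows "((\<lambda>y. tnorm (ereal y) u v) \<longlongrightarrow> tnorm (ereal x0) u v) (at x0)"
proof -
  have "((\<lambda>y. (u powr y + v powr y) powr (1/y)) \<longlongrightarrow> (u powr x0 + v powr x0) powr (1/x0)) (at x0)"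
    using assms by (intro tendsto_intros) (auto simp: add_pos_pos)
  then show ?thesis using assms by (simp add: tn_fin)
qed

lemma ev_within:
  assumes "open U" "t0 \<in> U" "\<And>t. t \<in> S \<Longrightarrow> t \<in> U \<Longrightarrow> Q t"
  shows "eventually Q (at t0 within S)"
  unfolding eventually_at_filter
  using eventually_nhds_in_open[OF assms(1,2)] by (rule eventually_mono) (use assms(3) in auto)

lemma mm_right:
  assumes pq: "0 < p" "p < q" and r: "0 < r" "r < 1" and x0: "1 \<le> x0"
    and gt: "c < mm p q (ereal x0) r"
  shows "\<exists>x'. x0 < x' \<and> c < mm p q (ereal x') r"
proof -
  have "((\<lambda>y. mm p q (ereal y) r) \<longlongrightarrow> mm p q (ereal x0) r) (at x0)"
    unfolding mm_def using pq r x0 by (intro phi_lim) auto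
  from order_tendstoD(1)[OF this gt] obtain d where d: "d > 0"
    and h: "\<And>y. y \<noteq> x0 \<Longrightarrow> dist y x0 < d \<Longrightarrow> c < mm p q (ereal y) r"
    unfolding eventually_at by auto
  have "c < mm p q (ereal (x0 + d/2)) r" using d by (intro h) (auto simp: dist_real_def)
  then show ?thesis using d by (intro exI[of _ "x0 + d/2"]) auto
qed

lemma mm_left:
  assumes pq: "0 < p" "p < q" and r: "0 < r" "r < 1" and x0: "1 < x0"
    and lt: "mm p q (ereal x0) r < c"
  shows "\<exists>x'. 1 < x' \<and> x' < x0 \<and> mm p q (ereal x') r < c"
proof -
  have "((\<lambda>y. mm p q (ereal y) r) \<longlongrightarrow> mm p q (ereal x0) r) (at x0)"
    unfolding mm_def using pq r x0 by (intro phi_lim) auto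
  from order_tendstoD(2)[OF this lt] obtain d where d: "d > 0"
    and h: "\<And>y. y \<noteq> x0 \<Longrightarrow> dist y x0 < d \<Longrightarrow> mm p q (ereal y) r < c"
    unfolding eventually_at by auto
  define y where "y = x0 - min (d/2) ((x0 - 1)/2)"
  have y: "1 < y" "y < x0" "dist y x0 < d" using d x0 unfolding y_def dist_real_def
    by (auto simp: min_def field_simps)
  then show ?thesis using h[of y] by auto
qed

lemma mm_inf_left:
  assumes pq: "0 < p" "p < q" and r: "0 < r" "r < 1"
    and lt: "mm p q \<infinity> r < c"
  shows "\<exists>x'. 1 < x' \<and> mm p q (ereal x') r < c"
proof -
  define M where "M = mm p q \<infinity> r"
  have M: "M = max ((1-r)/p) (r/q)" unfolding M_def mm_def tn_inf using pq r by simp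
  have "((\<lambda>x::real. 2 powr (1/x) * M) \<longlongrightarrow> 2 powr 0 * M) at_top"
    by (intro tendsto_intros tendsto_divide_0[OF tendsto_const] filterlim_at_top_imp_at_infinity[OF filterlim_ident]) auto
  then have "((\<lambda>x::real. 2 powr (1/x) * M) \<longlongrightarrow> M) at_top" by simp
  from order_tendstoD(2)[OF this] lt have "eventually (\<lambda>x. 2 powr (1/x) * M < c) at_top"
    unfolding M_def by simp
  moreover have "eventually (\<lambda>x::real. 1 < x) at_top" by (rule eventually_gt_at_top)
  ultimately have "eventually (\<lambda>x::real. 1 < x \<and> 2 powr (1/x) * M < c) at_top"
    by (rule eventually_conj[rotated])
  then obtain N where N: "\<And>n. n \<ge> N \<Longrightarrow> 1 < n \<and> 2 powr (1/n) * M < c"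
    unfolding eventually_at_top_linorder by blast
  obtain x where x: "1 < x" "2 powr (1/x) * M < c" using N[of N] by blast
  have "mm p q (ereal x) r \<le> 2 powr (1/x) * M"
    unfolding M mm_def using tn_bound[of "(1-r)/p" "r/q" x] pq r x by simp
  then show ?thesis using x by (intro exI[of _ x]) auto
qed


lemma rr_cont:
  assumes pq: "0 < p" "p < q"
  shows "continuous_on {t. 1 \<le> t} (rr p q)"
  unfolding continuous_on_def
proof (intro ballI order_tendstoI)
  fix t0 :: ereal assume "t0 \<in> {t. 1 \<le> t}"
  then have t0: "1 \<le> t0" by simp
  define R where "R = rr p q t0"
  have SP0: "SP p q t0 R" unfolding R_def using SP_rr[OF pq t0] .
  then have R: "0 < R" "R \<le> 1" unfolding SP_def by auto
  {
    fix a assume a: "a < rr p q t0"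
    define r1 where "r1 = (max a 0 + R)/2"
    have r1: "0 < r1" "r1 < R" "a < r1" "r1 < 1" using a R unfolding r1_def R_def by (auto simp: max_def)
    have m1: "1/q < mm p q t0 r1" using SP0 r1 unfolding SP_def by auto
    show "eventually (\<lambda>t. a < rr p q t) (at t0 within {t. 1 \<le> t})"
    proof (cases t0)
      case PInf
      show ?thesis
      proof (rule ev_within[of UNIV])
        fix t :: ereal assume "t \<in> {t. 1 \<le> t}"
        then have t: "1 \<le> t" by simp
        have "mm p q \<infinity> r1 \<le> mm p q t r1" using mm_mono[OF pq r1(1,4) t] by simp
        then have "1/q < mm p q t r1" using m1 PInf by simp
        then show "a < rr p q t" using rr_gt[OF pq t, of r1] r1 by simp
      qed auto
    next
      case (real x0)
      then have x0: "1 \<le> x0" using t0 by simp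
      obtain x' where x': "x0 < x'" "1/q < mm p q (ereal x') r1"
        using mm_right[OF pq r1(1,4) x0] m1 real by blast
      show ?thesis
      proof (rule ev_within[of "{..< ereal x'}"])
        fix t :: ereal assume "t \<in> {t. 1 \<le> t}" "t \<in> {..< ereal x'}"
        then have t: "1 \<le> t" "t \<le> ereal x'" by auto
        have "mm p q (ereal x') r1 \<le> mm p q t r1" using mm_mono[OF pq r1(1,4) t] by simp
        then have "1/q < mm p q t r1" using x' by simp
        then show "a < rr p q t" using rr_gt[OF pq t(1), of r1] r1 by simp
      qed (use real x' in auto)
    next
      case MInf
      then show ?thesis using t0 by simp
    qed
  }
  {
    fix b assume b: "rr p q t0 < b"
    show "eventually (\<lambda>t. rr p q t < b) (at t0 within {t. 1 \<le> t})"
    proof (cases "1 < b")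
      case True
      show ?thesis
      proof (rule ev_within[of UNIV])
        fix t :: ereal assume "t \<in> {t. 1 \<le> t}"
        then have "SP p q t (rr p q t)" using SP_rr[OF pq] by simp
        then show "rr p q t < b" using True unfolding SP_def by auto
      qed auto
    next
      case False
      then have Rl: "R < 1" using b unfolding R_def by simp
      have "t0 \<noteq> ereal 1"
      proof
        assume "t0 = ereal 1"
        then have "R = 1" unfolding R_def using SP_Inf[OF SP_one[OF pq]] by simp
        then show False using Rl by simp
      qed
      then have t0g: "1 < t0" using t0 by (simp add: order.order_iff_strict one_ereal_def)
      define r2 where "r2 = (R + b)/2"
      have r2: "0 < r2" "R < r2" "r2 < b" "r2 < 1" using b R False unfolding r2_def R_def by auto
      have m2: "mm p q t0 r2 < 1/q" using SP0 r2 unfolding SP_def by auto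
      obtain x' where x': "1 < x'" "ereal x' < t0" "mm p q (ereal x') r2 < 1/q"
      proof (cases t0)
        case PInf
        then show ?thesis using mm_inf_left[OF pq r2(1,4)] m2 that by auto
      next
        case (real x0)
        then have "1 < x0" using t0g by simp
        then show ?thesis using mm_left[OF pq r2(1,4) \<open>1 < x0\<close>] m2 real that by auto
      next
        case MInf
        then show ?thesis using t0 by simp
      qed
      show ?thesis
      proof (rule ev_within[of "{ereal x' <..}"])
        fix t :: ereal assume "t \<in> {t. 1 \<le> t}" "t \<in> {ereal x' <..}"
        then have t: "1 \<le> t" "ereal x' \<le> t" by auto
        have "mm p q t r2 \<le> mm p q (ereal x') r2"
          using mm_mono[OF pq r2(1,4) _ t(2)] x' by simp
        then have "mm p q t r2 < 1/q" using x' by simp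
        then show "rr p q t < b" using rr_lt[OF pq t(1), of r2] r2 by simp
      qed (use x' in auto)
    qed
  }
qed


lemma r0_rr: "r0 a1 a2 = rr (real_of_int a1) (real_of_int a2)"
  by (rule ext) (simp add: r0_def mu_def mm_def rr_def)

lemma dense_part:
  assumes pq: "0 < p" "p < q" and t: "1 < t"
  shows "ereal t \<in> closure {s :: ereal. 1 \<le> s \<and> rr p q s \<in> \<rat>}"
proof -
  let ?E = "{s :: ereal. 1 \<le> s \<and> rr p q s \<in> \<rat>}"
  have "ereal t islimpt ?E"
  proof (rule islimptI)
    fix T assume T: "ereal t \<in> T" "open T"
    obtain a b where ab: "a < ereal t" "ereal t < b" "{a <..< b} \<subseteq> T"
      using ereal_open_cont_interval2[OF T(2,1)] by auto
    obtain z where z: "ereal t < ereal z" "ereal z < b" using ereal_dense2[OF ab(2)] by auto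
    define lo where "lo = (t + z)/2"
    have lo: "t < lo" "lo < z" using z unfolding lo_def by auto
    define g where "g = (\<lambda>x. rr p q (ereal x))"
    have "g z < g lo" unfolding g_def using rr_strict[OF pq, of "ereal lo" "ereal z"] lo t by simp
    then obtain \<rho> where rho: "\<rho> \<in> \<rat>" "g z < \<rho>" "\<rho> < g lo" using Rats_dense_in_real by blast
    have cg: "continuous_on {lo..z} g" unfolding g_def
      by (rule continuous_on_compose2[OF rr_cont[OF pq] continuous_on_ereal[OF continuous_on_id]])
        (use lo t in auto)
    obtain y where y: "lo \<le> y" "y \<le> z" "g y = \<rho>"
      using IVT2'[of g z \<rho> lo, OF _ _ _ cg] rho lo by auto
    have "ereal t < ereal y" using y lo by simp
    then have y1: "a < ereal y" by (rule less_trans[OF ab(1)])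
    have "ereal y \<le> ereal z" using y by simp
    then have y2: "ereal y < b" using z(2) by (rule le_less_trans)
    have "ereal y \<in> T" using y1 y2 by (intro subsetD[OF ab(3)]) auto
    moreover have "ereal y \<in> ?E" using y rho lo t unfolding g_def by auto
    moreover have "ereal y \<noteq> ereal t" using y lo by auto
    ultimately show "\<exists>y\<in>?E. y \<in> T \<and> y \<noteq> ereal t" by blast
  qed
  then show ?thesis unfolding closure_def by simp
qed

theorem corollary1:
  fixes a1 a2 :: int
  assumes "1 < a1" and "a1 < a2" and "coprime a1 a2"
  shows "countable {t :: ereal. 1 \<le> t \<and> r0 a1 a2 t \<in> \<rat>}
       \<and> countable {t :: real. 1 < t \<and> \<bar>P a1 a2 t\<bar> > 1 / real_of_int a2
                              \<and> r0 a1 a2 (ereal t) \<in> \<rat>}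
       \<and> continuous_on {t :: ereal. 1 \<le> t} (r0 a1 a2)
       \<and> (\<forall>a :: real. 1 < a \<longrightarrow>
            {ereal a <..< \<infinity>} \<subseteq> closure {t :: ereal. 1 \<le> t \<and> r0 a1 a2 t \<in> \<rat>})"
proof -
  define p where "p = real_of_int a1"
  define q where "q = real_of_int a2"
  have pq: "0 < p" "p < q" using assms unfolding p_def q_def by auto
  have R: "r0 a1 a2 = rr p q" unfolding p_def q_def by (rule r0_rr)
  let ?E = "{t :: ereal. 1 \<le> t \<and> rr p q t \<in> \<rat>}"
  have injE: "inj_on (rr p q) ?E"
  proof (rule inj_onI)
    fix x y assume "x \<in> ?E" "y \<in> ?E" "rr p q x = rr p q y"
    then show "x = y" using rr_strict[OF pq, of x y] rr_strict[OF pq, of y x]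
      by (metis (mono_tags, lifting) less_irrefl linorder_neq_iff mem_Collect_eq)
  qed
  have cE: "countable ?E"
    by (rule countable_image_inj_on[OF countable_subset[OF _ countable_rat] injE]) auto
  let ?F = "{t :: real. 1 < t \<and> \<bar>P a1 a2 t\<bar> > 1 / real_of_int a2 \<and> rr p q (ereal t) \<in> \<rat>}"
  have "ereal ` ?F \<subseteq> ?E" by auto
  then have cF: "countable ?F"
    by (intro countable_image_inj_on[OF countable_subset[OF _ cE]]) (auto intro: inj_onI)
  have dens: "{ereal a <..< \<infinity>} \<subseteq> closure ?E" if "1 < a" for a :: real
  proof
    fix x assume x: "x \<in> {ereal a <..< \<infinity>}"
    then obtain t where t: "x = ereal t" "a < t" by (cases x) auto
    then show "x \<in> closure ?E" using dense_part[OF pq, of t] that by simp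
  qed
  show ?thesis unfolding R using cE cF rr_cont[OF pq] dens by blast
qed

end
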